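(* Let $\alpha\in\mathbb{S}_r$, $\beta\in\mathbb{S}_s$ with $\alpha\succ0$, $\beta\succ0$, and let $\sigma\in\mathbb{A}_r$, $\tau\in\mathbb{A}_s$. Consider the self-adjoint linear operator $\Phi:\mathbb{R}^{r\times s}\to\mathbb{R}^{r\times s}$, $\Phi(X):=\alpha X\beta+\sigma X\tau$, on the Hilbert space $\mathbb{R}^{r\times s}$ with the Frobenius inner product $\langle X,Y\rangle=\mathrm{Tr}(X^{T}Y)$. Then $\Phi$ is positive semi-definite if and only if $$\rho(\alpha^{-1}\sigma)\,\rho(\tau\beta^{-1})\le 1,$$ where $\rho(\cdot)$ denotes the spectral radius.
   Context: $\mathbb{S}_k$ and $\mathbb{A}_k$ denote the spaces of real symmetric and real antisymmetric $k\times k$ matrices, respectively. *)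

theory Defs
  imports "Jordan_Normal_Form.Spectral_Radius" "Jordan_Normal_Form.Gauss_Jordan_Elimination"
begin

definition mat_trace :: "'a :: comm_ring_1 mat \<Rightarrow> 'a" where
  "mat_trace A = (\<Sum>i<dim_row A. A $$ (i, i))"

definition frob_inner :: "real mat \<Rightarrow> real mat \<Rightarrow> real" where
  "frob_inner X Y = mat_trace (transpose_mat X * Y)"

definition sym_mat :: "nat \<Rightarrow> real mat \<Rightarrow> bool" where
  "sym_mat n A \<longleftrightarrow> A \<in> carrier_mat n n \<and> transpose_mat A = A"

definition antisym_mat :: "nat \<Rightarrow> real mat \<Rightarrow> bool" where
  "antisym_mat n A \<longleftrightarrow> A \<in> carrier_mat n n \<and> transpose_mat A = - A"

definition pos_def_mat :: "nat \<Rightarrow> real mat \<Rightarrow> bool" where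
  "pos_def_mat n A \<longleftrightarrow> A \<in> carrier_mat n n \<and>
     (\<forall>v \<in> carrier_vec n. v \<noteq> 0\<^sub>v n \<longrightarrow> v \<bullet> (A *\<^sub>v v) > 0)"

definition inv_mat :: "real mat \<Rightarrow> real mat" where
  "inv_mat A = the (mat_inverse A)"

definition real_spectral_radius :: "real mat \<Rightarrow> real" where
  "real_spectral_radius A = spectral_radius (map_mat complex_of_real A)"

definition Phi_op :: "real mat \<Rightarrow> real mat \<Rightarrow> real mat \<Rightarrow> real mat \<Rightarrow> real mat \<Rightarrow> real mat" where
  "Phi_op \<alpha> \<beta> \<sigma> \<tau> X = \<alpha> * X * \<beta> + \<sigma> * X * \<tau>"

definition psd_op :: "nat \<Rightarrow> nat \<Rightarrow> (real mat \<Rightarrow> real mat) \<Rightarrow> bool" where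
  "psd_op r s \<Phi> \<longleftrightarrow> (\<forall>X \<in> carrier_mat r s. frob_inner X (\<Phi> X) \<ge> 0)"

end

theory Submission
  imports Defs
begin


lemma pd_kernel: assumes "pos_def_mat n A" "v \<in> carrier_vec n" "A *\<^sub>v v = 0\<^sub>v n"
  shows "v = 0\<^sub>v n"
  using assms unfolding pos_def_mat_def by force

lemma inv_mat_props: assumes "pos_def_mat n A"
  shows "inv_mat A \<in> carrier_mat n n" "A * inv_mat A = 1\<^sub>m n" "inv_mat A * A = 1\<^sub>m n"
proof -
  have A: "A \<in> carrier_mat n n" using assms unfolding pos_def_mat_def by auto
  have "det A \<noteq> 0"
    using det_0_iff_vec_prod_zero[OF A] pd_kernel[OF assms] by auto
  from det_non_zero_imp_unit[OF A this] have U: "A \<in> Units (ring_mat TYPE(real) n ())" .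
  have "mat_inverse A \<noteq> None" using mat_inverse(1)[OF A, of "()"] U by auto
  then obtain B where B: "mat_inverse A = Some B" by auto
  from mat_inverse(2)[OF A B] B show "inv_mat A \<in> carrier_mat n n" "A * inv_mat A = 1\<^sub>m n" "inv_mat A * A = 1\<^sub>m n"
    unfolding inv_mat_def by auto
qed

definition ip :: "nat \<Rightarrow> nat \<Rightarrow> real mat \<Rightarrow> real mat \<Rightarrow> real" where
  "ip r s X Y = (\<Sum>a<r. \<Sum>j<s. X$$(a,j) * Y$$(a,j))"

lemma frob_ip: assumes "X \<in> carrier_mat r s" "Y \<in> carrier_mat r s"
  shows "frob_inner X Y = ip r s X Y"
proof -
  have "frob_inner X Y = (\<Sum>j<s. \<Sum>a<r. X$$(a,j) * Y$$(a,j))"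
    unfolding frob_inner_def mat_trace_def using assms
    by (auto simp: scalar_prod_def atLeast0LessThan intro!: sum.cong)
  also have "\<dots> = ip r s X Y" unfolding ip_def by (rule sum.swap)
  finally show ?thesis .
qed

lemma ip_mult_left: assumes X: "X \<in> carrier_mat r s" and P: "P \<in> carrier_mat r r'" and Y: "Y \<in> carrier_mat r' s"
  shows "ip r s X (P * Y) = ip r' s (transpose_mat P * X) Y"
proof -
  have "ip r s X (P * Y) = (\<Sum>a<r. \<Sum>j<s. \<Sum>b<r'. X$$(a,j) * P$$(a,b) * Y$$(b,j))"
    unfolding ip_def using assms
    by (auto simp: scalar_prod_def atLeast0LessThan sum_distrib_left mult.assoc intro!: sum.cong)
  also have "\<dots> = (\<Sum>j<s. \<Sum>a<r. \<Sum>b<r'. X$$(a,j) * P$$(a,b) * Y$$(b,j))"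
    by (rule sum.swap)
  also have "\<dots> = (\<Sum>j<s. \<Sum>b<r'. \<Sum>a<r. X$$(a,j) * P$$(a,b) * Y$$(b,j))"
    by (rule sum.cong[OF refl], rule sum.swap)
  also have "\<dots> = (\<Sum>b<r'. \<Sum>j<s. \<Sum>a<r. X$$(a,j) * P$$(a,b) * Y$$(b,j))"
    by (rule sum.swap)
  also have "\<dots> = ip r' s (transpose_mat P * X) Y"
    unfolding ip_def using assms
    by (auto simp: scalar_prod_def atLeast0LessThan sum_distrib_right sum_distrib_left ac_simps intro!: sum.cong)
  finally show ?thesis .
qed

lemma ip_mult_right: assumes X: "X \<in> carrier_mat r s" and Y: "Y \<in> carrier_mat r s'" and R: "R \<in> carrier_mat s' s"
  shows "ip r s X (Y * R) = ip r s' (X * transpose_mat R) Y"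
proof -
  have "ip r s X (Y * R) = (\<Sum>a<r. \<Sum>j<s. \<Sum>k<s'. X$$(a,j) * Y$$(a,k) * R$$(k,j))"
    unfolding ip_def using assms
    by (auto simp: scalar_prod_def atLeast0LessThan sum_distrib_left mult.assoc intro!: sum.cong)
  also have "\<dots> = (\<Sum>a<r. \<Sum>k<s'. \<Sum>j<s. X$$(a,j) * Y$$(a,k) * R$$(k,j))"
    by (rule sum.cong[OF refl], rule sum.swap)
  also have "\<dots> = ip r s' (X * transpose_mat R) Y"
    unfolding ip_def using assms
    by (auto simp: scalar_prod_def atLeast0LessThan sum_distrib_right sum_distrib_left ac_simps intro!: sum.cong)
  finally show ?thesis .
qed

lemma ip_sym: "ip r s X Y = ip r s Y X"
  unfolding ip_def by (simp add: mult.commute)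

lemma ip_add_right: assumes "Y \<in> carrier_mat r s" "Z \<in> carrier_mat r s"
  shows "ip r s X (Y + Z) = ip r s X Y + ip r s X Z"
  unfolding ip_def using assms by (auto simp: distrib_left sum.distrib intro!: sum.cong)

lemma ip_smult_right: assumes "Y \<in> carrier_mat r s"
  shows "ip r s X (c \<cdot>\<^sub>m Y) = c * ip r s X Y"
  unfolding ip_def using assms by (auto simp: sum_distrib_left mult.left_commute intro!: sum.cong)

lemma ip_uminus_right: assumes "Y \<in> carrier_mat r s"
  shows "ip r s X (- Y) = - ip r s X Y"
  unfolding ip_def using assms by (auto simp: sum_negf intro!: sum.cong)

lemma ip_self_nonneg_vec: "ip r s X X \<ge> 0"
  unfolding ip_def by (auto intro!: sum_nonneg)



lemma sum2_Suc_zero: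
  fixes F :: "nat \<Rightarrow> nat \<Rightarrow> real"
  assumes "\<And>j. j < Suc n \<Longrightarrow> F n j = 0" "\<And>i. i < Suc n \<Longrightarrow> F i n = 0"
  shows "(\<Sum>i<Suc n. \<Sum>j<Suc n. F i j) = (\<Sum>i<n. \<Sum>j<n. F i j)"
  using assms by simp

lemma quad_upd_zero:
  fixes M :: "nat \<Rightarrow> nat \<Rightarrow> real"
  shows "(\<Sum>i<Suc n. \<Sum>j<Suc n. (v(n:=0)) i * M i j * (v(n:=0)) j) = (\<Sum>i<n. \<Sum>j<n. v i * M i j * v j)"
  by (auto intro!: sum.cong)

lemma frob_psd_aux:
  fixes G B :: "nat \<Rightarrow> nat \<Rightarrow> real"
  assumes "\<And>v. (\<Sum>i<n. \<Sum>j<n. v i * G i j * v j) \<ge> 0"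
  and "\<And>i j. i < n \<Longrightarrow> j < n \<Longrightarrow> B i j = B j i"
  and "\<And>v. (\<exists>i<n. v i \<noteq> 0) \<Longrightarrow> (\<Sum>i<n. \<Sum>j<n. v i * B i j * v j) > 0"
  shows "(\<Sum>i<n. \<Sum>j<n. G i j * B i j) \<ge> 0"
  using assms
proof (induction n arbitrary: G B)
  case 0
  then show ?case by simp
next
  case (Suc n)
  note G = Suc.prems(1) and Bs = Suc.prems(2) and Bp = Suc.prems(3)
  define b where "b = B n n"
  have "(\<Sum>i<Suc n. \<Sum>j<Suc n. (\<lambda>i. if i = n then 1 else 0) i * B i j * (\<lambda>i. if i = n then 1 else 0) j) > 0"
    by (rule Bp) auto
  hence bpos: "b > 0" unfolding b_def by (simp add: if_distrib cong: if_cong)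
  define B' where "B' = (\<lambda>i j. B i j - B i n * B j n / b)"
  have split: "(\<Sum>i<Suc n. \<Sum>j<Suc n. G i j * B i j) =
     (\<Sum>i<Suc n. \<Sum>j<Suc n. B i n * G i j * B j n) / b + (\<Sum>i<Suc n. \<Sum>j<Suc n. G i j * B' i j)"
  proof -
    have pw: "G i j * B i j = B i n * G i j * B j n / b + G i j * B' i j" for i j
      unfolding B'_def using bpos by (simp add: field_simps)
    have "(\<Sum>i<Suc n. \<Sum>j<Suc n. G i j * B i j) = (\<Sum>i<Suc n. \<Sum>j<Suc n. B i n * G i j * B j n / b + G i j * B' i j)"
      by (simp add: pw)
    also have "\<dots> = (\<Sum>i<Suc n. \<Sum>j<Suc n. B i n * G i j * B j n / b) + (\<Sum>i<Suc n. \<Sum>j<Suc n. G i j * B' i j)"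
      by (simp add: sum.distrib)
    also have "(\<Sum>i<Suc n. \<Sum>j<Suc n. B i n * G i j * B j n / b) = (\<Sum>i<Suc n. \<Sum>j<Suc n. B i n * G i j * B j n) / b"
      by (simp only: sum_divide_distrib)
    finally show ?thesis .
  qed
  have t1: "(\<Sum>i<Suc n. \<Sum>j<Suc n. B i n * G i j * B j n) / b \<ge> 0"
    using G[of "\<lambda>i. B i n"] bpos by simp
  have B'row: "B' n j = 0" if "j < Suc n" for j
    unfolding B'_def using bpos Bs[of n j] that by (simp add: b_def)
  have B'col: "B' i n = 0" if "i < Suc n" for i
    unfolding B'_def using bpos by (simp add: b_def)
  have red: "(\<Sum>i<Suc n. \<Sum>j<Suc n. G i j * B' i j) = (\<Sum>i<n. \<Sum>j<n. G i j * B' i j)"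
    by (rule sum2_Suc_zero) (simp_all add: B'row B'col)
  have IH: "(\<Sum>i<n. \<Sum>j<n. G i j * B' i j) \<ge> 0"
  proof (rule Suc.IH)
    fix v :: "nat \<Rightarrow> real"
    show "(\<Sum>i<n. \<Sum>j<n. v i * G i j * v j) \<ge> 0"
      using G[of "v(n:=0)"] unfolding quad_upd_zero .
  next
    fix i j assume "i < n" "j < n"
    thus "B' i j = B' j i" unfolding B'_def using Bs[of i j] Bs[of i n] Bs[of j n] by simp
  next
    fix v :: "nat \<Rightarrow> real" assume nz: "\<exists>i<n. v i \<noteq> 0"
    define t where "t = - (\<Sum>j<n. B j n * v j) / b"
    define w where "w = v(n := t)"
    have wnz: "\<exists>i<Suc n. w i \<noteq> 0" using nz unfolding w_def by auto
    have c00: "(\<Sum>j<n. B j n * w j) = (\<Sum>j<n. B j n * v j)"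
      unfolding w_def by (auto intro: sum.cong)
    have c0: "(\<Sum>j<Suc n. B j n * w j) = 0"
      using c00 bpos by (simp add: w_def t_def b_def)
    have c0': "(\<Sum>i<Suc n. w i * B i n) = 0" using c0 by (simp add: mult.commute)
    have "(\<Sum>i<Suc n. \<Sum>j<Suc n. w i * B' i j * w j) =
       (\<Sum>i<Suc n. \<Sum>j<Suc n. w i * B i j * w j) - (\<Sum>i<Suc n. w i * B i n) * (\<Sum>j<Suc n. B j n * w j) / b"
    proof -
      have pw: "w i * B' i j * w j = w i * B i j * w j - (w i * B i n) * (B j n * w j) / b" for i j
        unfolding B'_def using bpos by (simp add: field_simps)
      have "(\<Sum>i<Suc n. \<Sum>j<Suc n. w i * B' i j * w j) = 
         (\<Sum>i<Suc n. \<Sum>j<Suc n. w i * B i j * w j) - (\<Sum>i<Suc n. \<Sum>j<Suc n. (w i * B i n) * (B j n * w j) / b)"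
        by (simp add: pw sum_subtractf)
      also have "(\<Sum>i<Suc n. \<Sum>j<Suc n. (w i * B i n) * (B j n * w j) / b) = (\<Sum>i<Suc n. w i * B i n) * (\<Sum>j<Suc n. B j n * w j) / b"
        by (simp only: sum_product sum_divide_distrib)
      finally show ?thesis .
    qed
    also have "\<dots> = (\<Sum>i<Suc n. \<Sum>j<Suc n. w i * B i j * w j)" using c0 by simp
    finally have eq1: "(\<Sum>i<Suc n. \<Sum>j<Suc n. w i * B' i j * w j) = (\<Sum>i<Suc n. \<Sum>j<Suc n. w i * B i j * w j)" .
    have eq2: "(\<Sum>i<Suc n. \<Sum>j<Suc n. w i * B' i j * w j) = (\<Sum>i<n. \<Sum>j<n. w i * B' i j * w j)"
      by (rule sum2_Suc_zero) (simp_all add: B'row B'col)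
    have eq3: "(\<Sum>i<n. \<Sum>j<n. w i * B' i j * w j) = (\<Sum>i<n. \<Sum>j<n. v i * B' i j * v j)"
      unfolding w_def by (intro sum.cong refl) auto
    show "(\<Sum>i<n. \<Sum>j<n. v i * B' i j * v j) > 0"
      using Bp[OF wnz] eq1 eq2 eq3 by simp
  qed
  show ?case using split t1 red IH by simp
qed



lemma pd_nonneg: assumes "pos_def_mat n A" "y \<in> carrier_vec n"
  shows "y \<bullet> (A *\<^sub>v y) \<ge> 0"
proof (cases "y = 0\<^sub>v n")
  case True
  have A: "A \<in> carrier_mat n n" using assms unfolding pos_def_mat_def by auto
  show ?thesis using True A by simp
next
  case False thus ?thesis using assms unfolding pos_def_mat_def by force
qed

lemma quad_vec: assumes M: "M \<in> carrier_mat n n"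
  shows "(\<Sum>i<n. \<Sum>j<n. v i * M$$(i,j) * v j) = vec n v \<bullet> (M *\<^sub>v vec n v)"
  using M by (auto simp: scalar_prod_def mult_mat_vec_def atLeast0LessThan sum_distrib_left ac_simps intro!: sum.cong)

lemma ip_AB_nonneg:
  assumes A: "pos_def_mat r A" and B: "sym_mat s B" "pos_def_mat s B" and X: "X \<in> carrier_mat r s"
  shows "ip r s X (A * X * B) \<ge> 0"
proof -
  have Ac: "A \<in> carrier_mat r r" using A unfolding pos_def_mat_def by auto
  have Bc: "B \<in> carrier_mat s s" and Bt: "transpose_mat B = B" using B unfolding sym_mat_def by auto
  have "ip r s X (A * X * B) = ip r s (X * B) (A * X)"
    using ip_mult_right[OF X _ Bc, of "A * X"] Ac X Bt by auto
  also have "\<dots> = ip s s B (transpose_mat X * (A * X))"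
    using ip_mult_left[of B s s "transpose_mat X" r "A * X"] Ac X Bc
    by (simp add: ip_sym)
  also have "\<dots> = ip s s (transpose_mat X * (A * X)) B" by (rule ip_sym)
  also have "\<dots> = (\<Sum>i<s. \<Sum>j<s. (transpose_mat X * (A * X))$$(i,j) * B$$(i,j))"
    unfolding ip_def ..
  also have "\<dots> \<ge> 0"
  proof (rule frob_psd_aux)
    fix v :: "nat \<Rightarrow> real"
    let ?v = "vec s v"
    have G: "transpose_mat X * (A * X) \<in> carrier_mat s s" using X Ac by auto
    have "(\<Sum>i<s. \<Sum>j<s. v i * (transpose_mat X * (A * X))$$(i,j) * v j)
       = ?v \<bullet> ((transpose_mat X * (A * X)) *\<^sub>v ?v)" by (rule quad_vec[OF G])
    also have "(transpose_mat X * (A * X)) *\<^sub>v ?v = transpose_mat X *\<^sub>v (A *\<^sub>v (X *\<^sub>v ?v))"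
    proof -
      have Xt: "transpose_mat X \<in> carrier_mat s r" using X by auto
      have vv: "?v \<in> carrier_vec s" by auto
      have "(transpose_mat X * (A * X)) *\<^sub>v ?v = transpose_mat X *\<^sub>v ((A * X) *\<^sub>v ?v)"
        using assoc_mult_mat_vec[OF Xt _ vv, of "A * X"] X Ac by auto
      also have "(A * X) *\<^sub>v ?v = A *\<^sub>v (X *\<^sub>v ?v)"
        using assoc_mult_mat_vec[OF Ac X vv] .
      finally show ?thesis .
    qed
    also have "?v \<bullet> \<dots> = (X *\<^sub>v ?v) \<bullet> (A *\<^sub>v (X *\<^sub>v ?v))"
      using transpose_vec_mult_scalar[of "transpose_mat X" s r "A *\<^sub>v (X *\<^sub>v ?v)" ?v] X Ac
      by (simp add: comm_scalar_prod[of _ s])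
    also have "\<dots> \<ge> 0" using pd_nonneg[OF A, of "X *\<^sub>v ?v"] X by auto
    finally show "(\<Sum>i<s. \<Sum>j<s. v i * (transpose_mat X * (A * X))$$(i,j) * v j) \<ge> 0" .
  next
    fix i j assume "i < s" "j < s"
    thus "B$$(i,j) = B$$(j,i)" using Bt Bc by (metis index_transpose_mat(1) carrier_matD)
  next
    fix v :: "nat \<Rightarrow> real" assume nz: "\<exists>i<s. v i \<noteq> 0"
    hence "vec s v \<noteq> 0\<^sub>v s" by (auto simp: vec_eq_iff)
    hence "vec s v \<bullet> (B *\<^sub>v vec s v) > 0" using B unfolding pos_def_mat_def by auto
    thus "(\<Sum>i<s. \<Sum>j<s. v i * B$$(i,j) * v j) > 0" using quad_vec[OF Bc] by simp
  qed
  finally show ?thesis .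
qed



definition bf :: "nat \<Rightarrow> nat \<Rightarrow> real mat \<Rightarrow> real mat \<Rightarrow> real mat \<Rightarrow> real mat \<Rightarrow> real" where
  "bf r s A B Y Z = ip r s Y (A * Z * B)"

lemma bf_sym:
  assumes Ac: "A \<in> carrier_mat r r" and At: "transpose_mat A = A"
    and Bc: "B \<in> carrier_mat s s" and Bt: "transpose_mat B = B"
    and Y: "Y \<in> carrier_mat r s" and Z: "Z \<in> carrier_mat r s"
  shows "bf r s A B Y Z = bf r s A B Z Y"
proof -
  have "bf r s A B Y Z = ip r s (Y * B) (A * Z)"
    unfolding bf_def using ip_mult_right[OF Y _ Bc, of "A * Z"] Ac Z Bt by auto
  also have "\<dots> = ip r s (A * (Y * B)) Z"
    using ip_mult_left[OF _ Ac Z, of "Y * B"] Y Bc At by auto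
  also have "A * (Y * B) = A * Y * B" using Ac Y Bc by (simp add: assoc_mult_mat)
  finally show ?thesis unfolding bf_def by (simp add: ip_sym)
qed

lemma bf_lin:
  assumes Ac: "A \<in> carrier_mat r r" and Bc: "B \<in> carrier_mat s s"
    and Z1: "Z1 \<in> carrier_mat r s" and Z2: "Z2 \<in> carrier_mat r s"
  shows "bf r s A B Y (Z1 + t \<cdot>\<^sub>m Z2) = bf r s A B Y Z1 + t * bf r s A B Y Z2"
proof -
  have "A * (Z1 + t \<cdot>\<^sub>m Z2) * B = A * Z1 * B + t \<cdot>\<^sub>m (A * Z2 * B)"
  proof -
    have "A * (Z1 + t \<cdot>\<^sub>m Z2) = A * Z1 + t \<cdot>\<^sub>m (A * Z2)"
      using Ac Z1 Z2 by (simp add: mult_add_distrib_mat[of A r r] mult_smult_distrib[of A r r])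
    moreover have "(A * Z1 + t \<cdot>\<^sub>m (A * Z2)) * B = A * Z1 * B + t \<cdot>\<^sub>m (A * Z2 * B)"
      using Ac Z1 Z2 Bc by (simp add: add_mult_distrib_mat[of _ r s] mult_smult_assoc_mat[of _ r s])
    ultimately show ?thesis by simp
  qed
  thus ?thesis unfolding bf_def using Ac Bc Z1 Z2
    by (simp add: ip_add_right ip_smult_right)
qed

lemma quad_disc:
  fixes a b c :: real
  assumes "\<And>t. a + 2 * b * t + c * t^2 \<ge> 0" and "c \<ge> 0"
  shows "b^2 \<le> a * c"
proof (cases "c = 0")
  case True
  show ?thesis
  proof (cases "b = 0")
    case False
    have "a + 2 * b * (- (a + 1) / (2 * b)) + c * (- (a + 1) / (2 * b))^2 \<ge> 0" by (rule assms)
    with True False show ?thesis by (simp add: field_simps)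
  qed (use True in simp)
next
  case False
  hence c: "c > 0" using assms(2) by simp
  have "a + 2 * b * (- b / c) + c * (- b / c)^2 \<ge> 0" by (rule assms)
  hence "a - b^2 / c \<ge> 0" using c by (simp add: field_simps power2_eq_square)
  hence "b^2 / c \<le> a" by simp
  thus ?thesis using c by (simp add: field_simps)
qed

lemma bf_CS:
  assumes Ac: "A \<in> carrier_mat r r" and At: "transpose_mat A = A"
    and Bc: "B \<in> carrier_mat s s" and Bt: "transpose_mat B = B"
    and psd: "\<And>W. W \<in> carrier_mat r s \<Longrightarrow> bf r s A B W W \<ge> 0"
    and X: "X \<in> carrier_mat r s" and Z: "Z \<in> carrier_mat r s"
  shows "(bf r s A B X Z)^2 \<le> bf r s A B X X * bf r s A B Z Z"
proof (rule quad_disc)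
  fix t :: real
  let ?f = "bf r s A B"
  have W: "X + t \<cdot>\<^sub>m Z \<in> carrier_mat r s" using X Z by auto
  have "?f (X + t \<cdot>\<^sub>m Z) (X + t \<cdot>\<^sub>m Z) = ?f (X + t \<cdot>\<^sub>m Z) X + t * ?f (X + t \<cdot>\<^sub>m Z) Z"
    by (rule bf_lin[OF Ac Bc X Z])
  also have "?f (X + t \<cdot>\<^sub>m Z) X = ?f X (X + t \<cdot>\<^sub>m Z)" using bf_sym[OF Ac At Bc Bt W X] .
  also have "\<dots> = ?f X X + t * ?f X Z" by (rule bf_lin[OF Ac Bc X Z])
  also have "?f (X + t \<cdot>\<^sub>m Z) Z = ?f Z (X + t \<cdot>\<^sub>m Z)" using bf_sym[OF Ac At Bc Bt W Z] .
  also have "\<dots> = ?f Z X + t * ?f Z Z" by (rule bf_lin[OF Ac Bc X Z])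
  also have "?f Z X = ?f X Z" using bf_sym[OF Ac At Bc Bt Z X] .
  finally have "?f (X + t \<cdot>\<^sub>m Z) (X + t \<cdot>\<^sub>m Z) = ?f X X + 2 * ?f X Z * t + ?f Z Z * t^2"
    by (simp add: algebra_simps power2_eq_square)
  thus "?f X X + 2 * ?f X Z * t + ?f Z Z * t^2 \<ge> 0"
    using psd[OF W] by simp
next
  show "bf r s A B Z Z \<ge> 0" using psd[OF Z] .
qed



lemma mat_assoc': "dim_col A = dim_row B \<Longrightarrow> dim_col B = dim_row C \<Longrightarrow> (A * B) * C = A * (B * (C :: 'a :: semiring_0 mat))"
  by (rule assoc_mult_mat[of A "dim_row A" "dim_col A" B "dim_col B" C "dim_col C"], auto)

lemma pow_mat_Suc_left: assumes A: "A \<in> carrier_mat n n"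
  shows "A ^\<^sub>m Suc k = A * A ^\<^sub>m k"
proof (induction k)
  case 0 then show ?case using A by simp
next
  case (Suc k)
  have "A ^\<^sub>m Suc (Suc k) = (A * A ^\<^sub>m k) * A" using Suc by simp
  also have "\<dots> = A * (A ^\<^sub>m k * A)" using A by (simp add: assoc_mult_mat[of _ n n _ n _ n])
  finally show ?case by simp
qed

lemma pow_mat_add: assumes A: "A \<in> carrier_mat n n"
  shows "A ^\<^sub>m (m + k) = A ^\<^sub>m m * A ^\<^sub>m k"
proof (induction k)
  case 0 then show ?case using A by simp
next
  case (Suc k)
  have "A ^\<^sub>m (m + Suc k) = (A ^\<^sub>m m * A ^\<^sub>m k) * A" using Suc by simp
  also have "\<dots> = A ^\<^sub>m m * (A ^\<^sub>m k * A)" using A by (simp add: assoc_mult_mat[of _ n n _ n _ n])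
  finally show ?case by simp
qed

lemma ip_swap_ST:
  assumes S: "antisym_mat r S" and T: "antisym_mat s T"
    and Y: "Y \<in> carrier_mat r s" and Z: "Z \<in> carrier_mat r s"
  shows "ip r s Z (S * Y * T) = ip r s Y (S * Z * T)"
proof -
  have Sc: "S \<in> carrier_mat r r" and St: "transpose_mat S = - S" using S unfolding antisym_mat_def by auto
  have Tc: "T \<in> carrier_mat s s" and Tt: "transpose_mat T = - T" using T unfolding antisym_mat_def by auto
  have "ip r s Z (S * Y * T) = ip r s (Z * transpose_mat T) (S * Y)"
    using ip_mult_right[OF Z _ Tc, of "S * Y"] Sc Y by auto
  also have "\<dots> = ip r s (transpose_mat S * (Z * transpose_mat T)) Y"
    using ip_mult_left[OF _ Sc Y, of "Z * transpose_mat T"] Z Tc by auto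
  also have "transpose_mat S * (Z * transpose_mat T) = S * Z * T"
  proof -
    have "transpose_mat S * (Z * transpose_mat T) = (- S) * (- (Z * T))"
      using St Tt Z Tc by simp
    also have "\<dots> = S * (Z * T)" using Sc Z Tc by simp
    also have "\<dots> = S * Z * T" using Sc Z Tc by (simp add: assoc_mult_mat)
    finally show ?thesis .
  qed
  finally show ?thesis by (simp add: ip_sym)
qed

definition lp :: "real mat \<Rightarrow> real mat \<Rightarrow> nat \<Rightarrow> real mat \<Rightarrow> real mat" where
  "lp M N m Y = M ^\<^sub>m m * Y * N ^\<^sub>m m"

lemma lp_carrier: "M \<in> carrier_mat r r \<Longrightarrow> N \<in> carrier_mat s s \<Longrightarrow> Y \<in> carrier_mat r s \<Longrightarrow> lp M N m Y \<in> carrier_mat r s"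
  unfolding lp_def by auto

lemma lp_0: "Y \<in> carrier_mat r s \<Longrightarrow> M \<in> carrier_mat r r \<Longrightarrow> N \<in> carrier_mat s s \<Longrightarrow> lp M N 0 Y = Y"
  unfolding lp_def by auto

lemma lp_Suc: assumes M: "M \<in> carrier_mat r r" and N: "N \<in> carrier_mat s s" and Y: "Y \<in> carrier_mat r s"
  shows "lp M N (Suc m) Y = lp M N m (M * Y * N)" "lp M N (Suc m) Y = M * lp M N m Y * N"
proof -
  have dims: "dim_row M = r" "dim_col M = r" "dim_row N = s" "dim_col N = s" "dim_row Y = r" "dim_col Y = s"
    using M N Y by auto
  have e1: "M ^\<^sub>m Suc m = M ^\<^sub>m m * M" by simp
  have e2: "N ^\<^sub>m Suc m = N * N ^\<^sub>m m" by (rule pow_mat_Suc_left[OF N])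
  show "lp M N (Suc m) Y = lp M N m (M * Y * N)"
    unfolding lp_def e1 e2 by (simp add: mat_assoc' dims)
  have e3: "M ^\<^sub>m Suc m = M * M ^\<^sub>m m" by (rule pow_mat_Suc_left[OF M])
  have e4: "N ^\<^sub>m Suc m = N ^\<^sub>m m * N" by simp
  show "lp M N (Suc m) Y = M * lp M N m Y * N"
    unfolding lp_def e3 e4 by (simp add: mat_assoc' dims)
qed

lemma lp_lp: assumes M: "M \<in> carrier_mat r r" and N: "N \<in> carrier_mat s s" and Y: "Y \<in> carrier_mat r s"
  shows "lp M N m (lp M N k Y) = lp M N (m + k) Y"
proof -
  have dims: "dim_row M = r" "dim_col M = r" "dim_row N = s" "dim_col N = s" "dim_row Y = r" "dim_col Y = s"
    using M N Y by auto
  have e1: "M ^\<^sub>m (m + k) = M ^\<^sub>m m * M ^\<^sub>m k" by (rule pow_mat_add[OF M])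
  have e2: "N ^\<^sub>m (m + k) = N ^\<^sub>m k * N ^\<^sub>m m" using pow_mat_add[OF N, of k m] by (simp add: add.commute)
  show ?thesis
    unfolding lp_def e1 e2 by (simp add: mat_assoc' dims)
qed

lemma bf_adj:
  assumes Ac: "A \<in> carrier_mat r r" and At: "transpose_mat A = A"
    and Bc: "B \<in> carrier_mat s s" and Bt: "transpose_mat B = B"
    and S: "antisym_mat r S" and T: "antisym_mat s T"
    and M: "M \<in> carrier_mat r r" and N: "N \<in> carrier_mat s s"
    and AM: "A * M = S" and NB: "N * B = T"
    and Y: "Y \<in> carrier_mat r s" and Z: "Z \<in> carrier_mat r s"
  shows "bf r s A B Y (M * Z * N) = ip r s Y (S * Z * T)"
    and "bf r s A B (M * Y * N) Z = bf r s A B Y (M * Z * N)"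
proof -
  have eq: "A * (M * W * N) * B = S * W * T" if W: "W \<in> carrier_mat r s" for W
  proof -
    have dims: "dim_row M = r" "dim_col M = r" "dim_row N = s" "dim_col N = s" "dim_row W = r" "dim_col W = s"
      "dim_row A = r" "dim_col A = r" "dim_row B = s" "dim_col B = s"
      using M N W Ac Bc by auto
    show ?thesis unfolding AM[symmetric] NB[symmetric] by (simp add: mat_assoc' dims)
  qed
  show 1: "bf r s A B Y (M * Z * N) = ip r s Y (S * Z * T)" unfolding bf_def eq[OF Z] ..
  have "bf r s A B (M * Y * N) Z = bf r s A B Z (M * Y * N)"
    by (rule bf_sym[OF Ac At Bc Bt _ Z], insert M Y N, auto)
  also have "\<dots> = ip r s Z (S * Y * T)" unfolding bf_def eq[OF Y] ..
  also have "\<dots> = ip r s Y (S * Z * T)" by (rule ip_swap_ST[OF S T Y Z])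
  finally show "bf r s A B (M * Y * N) Z = bf r s A B Y (M * Z * N)" unfolding 1 .
qed

lemma bf_adj_pow:
  assumes Ac: "A \<in> carrier_mat r r" and At: "transpose_mat A = A"
    and Bc: "B \<in> carrier_mat s s" and Bt: "transpose_mat B = B"
    and S: "antisym_mat r S" and T: "antisym_mat s T"
    and M: "M \<in> carrier_mat r r" and N: "N \<in> carrier_mat s s"
    and AM: "A * M = S" and NB: "N * B = T"
  shows "Y \<in> carrier_mat r s \<Longrightarrow> Z \<in> carrier_mat r s \<Longrightarrow> bf r s A B (lp M N m Y) Z = bf r s A B Y (lp M N m Z)"
proof (induction m arbitrary: Y Z)
  case 0 thus ?case using M N by (simp add: lp_0)
next
  case (Suc m)
  have Y': "M * Y * N \<in> carrier_mat r s" using Suc.prems M N by auto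
  have "bf r s A B (lp M N (Suc m) Y) Z = bf r s A B (lp M N m (M * Y * N)) Z"
    using lp_Suc(1)[OF M N Suc.prems(1)] by simp
  also have "\<dots> = bf r s A B (M * Y * N) (lp M N m Z)" by (rule Suc.IH[OF Y' Suc.prems(2)])
  also have "\<dots> = bf r s A B Y (M * lp M N m Z * N)"
    by (rule bf_adj(2)[OF Ac At Bc Bt S T M N AM NB Suc.prems(1)], rule lp_carrier[OF M N Suc.prems(2)])
  also have "M * lp M N m Z * N = lp M N (Suc m) Z" using lp_Suc(2)[OF M N Suc.prems(2)] by simp
  finally show ?case .
qed



lemma gelfand_real:
  fixes h :: "nat \<Rightarrow> real" and K c :: real
  assumes CS: "\<And>m. (h m)^2 \<le> h 0 * h (2 * m)"
    and nn: "\<And>m. h (2 * m) \<ge> 0"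
    and bd: "\<And>m. \<bar>h m\<bar> \<le> K * c ^ m"
    and c: "c > 0"
  shows "\<bar>h 1\<bar> \<le> c * h 0"
proof (rule ccontr)
  assume neg: "\<not> ?thesis"
  have N: "h 0 \<ge> 0" using nn[of 0] by simp
  have P: "(h 1) ^ (2 ^ Suc k) \<le> (h 0) ^ (2 ^ Suc k - 1) * h (2 ^ Suc k)" for k
  proof (induction k)
    case 0 thus ?case using CS[of 1] by simp
  next
    case (Suc k)
    define n where "n = (2 ^ Suc k :: nat)"
    have n1: "n \<ge> 1" unfolding n_def by simp
    have nS: "2 ^ Suc (Suc k) = 2 * n" unfolding n_def by simp
    have IH: "(h 1) ^ n \<le> (h 0) ^ (n - 1) * h n" using Suc.IH unfolding n_def .
    have "(h 1) ^ (2 ^ Suc (Suc k)) = ((h 1) ^ n)^2" unfolding nS by (simp add: power_mult mult.commute)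
    also have "\<dots> \<le> ((h 0) ^ (n - 1) * h n)^2"
    proof (rule power_mono[OF IH])
      show "0 \<le> h 1 ^ n" unfolding n_def by (simp add: zero_le_even_power)
    qed
    also have "\<dots> = ((h 0) ^ (n - 1))^2 * (h n)^2" by (simp add: power_mult_distrib)
    also have "\<dots> \<le> ((h 0) ^ (n - 1))^2 * (h 0 * h (2 * n))"
      by (rule mult_left_mono[OF CS], simp)
    also have "\<dots> = (h 0) ^ (2 * n - 1) * h (2 * n)"
    proof -
      have e: "2 * n - 1 = (n - 1) * 2 + 1" using n1 by simp
      show ?thesis unfolding e by (simp add: power_add power_mult)
    qed
    finally show ?case unfolding nS .
  qed
  show False
  proof (cases "h 0 = 0")
    case True
    have "(h 1)^2 \<le> 0" using CS[of 1] True by simp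
    hence "h 1 = 0" by simp
    thus False using neg True by simp
  next
    case False
    hence N0: "h 0 > 0" using N by simp
    define d where "d = \<bar>h 1\<bar> / (c * h 0)"
    have d1: "d > 1" unfolding d_def using neg N0 c by (simp add: field_simps)
    obtain n where n: "K / h 0 < d ^ n" using real_arch_pow[OF d1] by blast
    define n' where "n' = (2 ^ Suc n :: nat)"
    have nn': "n \<le> n'" unfolding n'_def using less_exp[of n] power_increasing[of n "Suc n" "2::nat"] by linarith
    have pos: "n' \<ge> 1" unfolding n'_def by simp
    have ev: "even n'" unfolding n'_def by simp
    have dn: "d ^ n \<le> d ^ n'" using d1 nn' by (simp add: power_increasing)
    have "\<bar>h 1\<bar> = d * (c * h 0)" unfolding d_def using N0 c by simp
    hence E: "(h 1) ^ n' = (d * (c * h 0)) ^ n'"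
      using power_even_abs[OF ev, of "h 1"] by simp
    have "(d * (c * h 0)) ^ n' \<le> (h 0) ^ (n' - 1) * h n'" using P[of n] E unfolding n'_def by simp
    also have "\<dots> \<le> (h 0) ^ (n' - 1) * (K * c ^ n')"
      by (rule mult_left_mono, use bd[of n'] in auto, insert N, simp)
    finally have A: "(d ^ n' * h 0 ^ n') * c ^ n' \<le> ((h 0) ^ (n' - 1) * K) * c ^ n'"
      by (simp add: power_mult_distrib ac_simps)
    have cn: "c ^ n' > 0" using c by simp
    have A2: "d ^ n' * h 0 ^ n' \<le> (h 0) ^ (n' - 1) * K"
      by (rule mult_right_le_imp_le[OF A cn])
    have e: "Suc (n' - 1) = n'" using pos by simp
    have hn: "h 0 ^ n' = h 0 ^ (n' - 1) * h 0" using power_Suc2[of "h 0" "n' - 1"] unfolding e .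
    have "(h 0 ^ (n' - 1)) * (d ^ n' * h 0) \<le> (h 0 ^ (n' - 1)) * K"
      using A2 unfolding hn by (simp add: ac_simps)
    moreover have "h 0 ^ (n' - 1) > 0" using N0 by simp
    ultimately have "d ^ n' * h 0 \<le> K" by (rule mult_left_le_imp_le)
    hence "d ^ n' \<le> K / h 0" using N0 by (simp add: field_simps)
    thus False using n dn by simp
  qed
qed



lemma smult_smult_mat': "a \<cdot>\<^sub>m (b \<cdot>\<^sub>m (B :: 'a :: comm_ring_1 mat)) = (a * b) \<cdot>\<^sub>m B"
  by (rule eq_matI) (auto simp: ac_simps)

lemma pow_smult_mat: assumes A: "(A :: 'a :: comm_ring_1 mat) \<in> carrier_mat n n"
  shows "(a \<cdot>\<^sub>m A) ^\<^sub>m k = (a ^ k) \<cdot>\<^sub>m (A ^\<^sub>m k)"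
proof (induction k)
  case 0 then show ?case using A by (auto intro!: eq_matI)
next
  case (Suc k)
  have "(a \<cdot>\<^sub>m A) ^\<^sub>m Suc k = ((a ^ k) \<cdot>\<^sub>m (A ^\<^sub>m k)) * (a \<cdot>\<^sub>m A)" using Suc by simp
  also have "\<dots> = a ^ k \<cdot>\<^sub>m (a \<cdot>\<^sub>m (A ^\<^sub>m k * A))"
    using A by (simp add: mult_smult_assoc_mat[of _ n n _ n] mult_smult_distrib[of _ n n _ n] smult_smult_mat' mult.commute)
  also have "\<dots> = (a ^ Suc k) \<cdot>\<^sub>m (A ^\<^sub>m Suc k)" by (simp add: smult_smult_mat' ac_simps)
  finally show ?case .
qed

lemma pow_bound:
  fixes M :: "real mat"
  assumes M: "M \<in> carrier_mat n n" and n: "n > 0" and c: "c > real_spectral_radius M"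
  shows "\<exists>K. \<forall>m i j. i < n \<longrightarrow> j < n \<longrightarrow> \<bar>(M ^\<^sub>m m) $$ (i,j)\<bar> \<le> K * c ^ m"
proof -
  define Mc where "Mc = map_mat complex_of_real M"
  have Mc: "Mc \<in> carrier_mat n n" using M unfolding Mc_def by auto
  have rho: "real_spectral_radius M = spectral_radius Mc" unfolding real_spectral_radius_def Mc_def ..
  have rho0: "spectral_radius Mc \<ge> 0"
    using spectral_radius_mem_max(1)[OF Mc n] by auto
  have cpos: "c > 0" using c rho rho0 by simp
  define D where "D = complex_of_real (1 / c) \<cdot>\<^sub>m Mc"
  have D: "D \<in> carrier_mat n n" using Mc unfolding D_def by auto
  have "spectral_radius D < 1"
  proof -
    from spectral_radius_mem_max(1)[OF D n] obtain k where k: "k \<in> spectrum D"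
      and eq: "spectral_radius D = norm k" by auto
    from k obtain v where v: "eigenvector D v k" unfolding spectrum_def eigenvalue_def by auto
    have vc: "v \<in> carrier_vec n" and v0: "v \<noteq> 0\<^sub>v n" and Dv: "D *\<^sub>v v = k \<cdot>\<^sub>v v"
      using v D unfolding eigenvector_def by auto
    have "Mc *\<^sub>v v = (complex_of_real c * k) \<cdot>\<^sub>v v"
    proof (rule eq_vecI)
      fix i assume i: "i < dim_vec (complex_of_real c * k \<cdot>\<^sub>v v)"
      hence i': "i < n" using vc by auto
      have "(D *\<^sub>v v) $ i = (k \<cdot>\<^sub>v v) $ i" using Dv by simp
      hence "complex_of_real (1 / c) * (row Mc i \<bullet> v) = k * v $ i"
        using i' Mc vc unfolding D_def by (simp add: scalar_prod_def sum_distrib_left ac_simps)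
      hence "row Mc i \<bullet> v = complex_of_real c * k * v $ i"
        using cpos by (simp add: field_simps)
      thus "(Mc *\<^sub>v v) $ i = (complex_of_real c * k \<cdot>\<^sub>v v) $ i" using i' Mc vc by simp
    qed (use vc Mc in auto)
    hence "eigenvector Mc v (complex_of_real c * k)" unfolding eigenvector_def using vc v0 Mc by auto
    hence "complex_of_real c * k \<in> spectrum Mc" unfolding spectrum_def eigenvalue_def by auto
    hence "norm (complex_of_real c * k) \<le> spectral_radius Mc"
      using spectral_radius_mem_max(2)[OF Mc n] by auto
    hence "c * norm k \<le> spectral_radius Mc" using cpos by (simp add: norm_mult)
    hence "c * norm k < c" using c rho by simp
    thus ?thesis using eq cpos by simp
  qed
  from spectral_radius_jnf_norm_bound_less_1_upper_triangular[OF D this]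
  obtain K where K: "\<And>k. norm_bound (D ^\<^sub>m k) K" by auto
  show ?thesis
  proof (intro exI allI impI)
    fix m i j assume i: "i < n" and j: "j < n"
    have "D ^\<^sub>m m = complex_of_real (1 / c) ^ m \<cdot>\<^sub>m (Mc ^\<^sub>m m)" unfolding D_def by (rule pow_smult_mat[OF Mc])
    also have "Mc ^\<^sub>m m = map_mat complex_of_real (M ^\<^sub>m m)"
      unfolding Mc_def by (rule of_real_hom.mat_hom_pow[OF M, symmetric])
    finally have "(D ^\<^sub>m m) $$ (i,j) = (1 / complex_of_real c) ^ m * complex_of_real ((M ^\<^sub>m m) $$ (i,j))"
      using i j M by simp
    hence "norm ((D ^\<^sub>m m) $$ (i,j)) = \<bar>(1 / c) ^ m * (M ^\<^sub>m m) $$ (i,j)\<bar>"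
      by (simp add: norm_mult norm_power norm_divide abs_mult power_abs)
    moreover have "norm ((D ^\<^sub>m m) $$ (i,j)) \<le> K" using K[of m] i j D unfolding norm_bound_def by auto
    ultimately have "\<bar>(1 / c) ^ m * (M ^\<^sub>m m) $$ (i,j)\<bar> \<le> K" by linarith
    hence "\<bar>(M ^\<^sub>m m) $$ (i,j)\<bar> / c ^ m \<le> K" using cpos by (simp add: abs_mult power_divide)
    thus "\<bar>(M ^\<^sub>m m) $$ (i,j)\<bar> \<le> K * c ^ m" using cpos by (simp add: field_simps)
  qed
qed



lemma ip_bound: assumes X: "X \<in> carrier_mat r s" and Z: "Z \<in> carrier_mat r s"
  and bx: "norm_bound X bx" and bz: "norm_bound Z bz"
  shows "\<bar>ip r s X Z\<bar> \<le> real r * real s * bx * bz"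
proof -
  have "\<bar>ip r s X Z\<bar> \<le> (\<Sum>a<r. \<Sum>j<s. \<bar>X$$(a,j) * Z$$(a,j)\<bar>)"
    unfolding ip_def by (rule order.trans[OF sum_abs], rule sum_mono, rule sum_abs)
  also have "\<dots> \<le> (\<Sum>a<r. \<Sum>j<s. bx * bz)"
  proof (rule sum_mono, rule sum_mono)
    fix a j assume "a \<in> {..<r}" "j \<in> {..<s}"
    hence a: "a < r" and j: "j < s" by auto
    have 1: "\<bar>X$$(a,j)\<bar> \<le> bx" using bx a j X unfolding norm_bound_def by auto
    have 2: "\<bar>Z$$(a,j)\<bar> \<le> bz" using bz a j Z unfolding norm_bound_def by auto
    show "\<bar>X$$(a,j) * Z$$(a,j)\<bar> \<le> bx * bz" unfolding abs_mult
      by (rule mult_mono[OF 1 2], use 1 in linarith, simp)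
  qed
  also have "\<dots> = real r * real s * bx * bz" by simp
  finally show ?thesis .
qed

lemma h_bound:
  assumes Ac: "A \<in> carrier_mat r r" and Bc: "B \<in> carrier_mat s s"
    and M: "M \<in> carrier_mat r r" and N: "N \<in> carrier_mat s s" and X: "X \<in> carrier_mat r s"
    and K1: "\<And>m i j. i < r \<Longrightarrow> j < r \<Longrightarrow> \<bar>(M ^\<^sub>m m) $$ (i,j)\<bar> \<le> K1 * c1 ^ m"
    and K2: "\<And>m i j. i < s \<Longrightarrow> j < s \<Longrightarrow> \<bar>(N ^\<^sub>m m) $$ (i,j)\<bar> \<le> K2 * c2 ^ m"
  shows "\<exists>K. \<forall>m. \<bar>bf r s A B X (lp M N m X)\<bar> \<le> K * (c1 * c2) ^ m"
proof -
  define bx where "bx = Max {norm (X $$ (i,j)) | i j. i < dim_row X \<and> j < dim_col X}"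
  define ba where "ba = Max {norm (A $$ (i,j)) | i j. i < dim_row A \<and> j < dim_col A}"
  define bb where "bb = Max {norm (B $$ (i,j)) | i j. i < dim_row B \<and> j < dim_col B}"
  have nX: "norm_bound X bx" unfolding bx_def by (rule norm_bound_max)
  have nA: "norm_bound A ba" unfolding ba_def by (rule norm_bound_max)
  have nB: "norm_bound B bb" unfolding bb_def by (rule norm_bound_max)
  define K where "K = real r * real s * bx * (ba * ((K1 * bx * real r) * K2 * real s) * real r * bb * real s)"
  show ?thesis
  proof (intro exI allI)
    fix m
    have Mm: "M ^\<^sub>m m \<in> carrier_mat r r" using M by simp
    have Nm: "N ^\<^sub>m m \<in> carrier_mat s s" using N by simp
    have nM: "norm_bound (M ^\<^sub>m m) (K1 * c1 ^ m)"
    proof (rule norm_boundI)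
      fix i j assume "i < dim_row (M ^\<^sub>m m)" "j < dim_col (M ^\<^sub>m m)"
      hence "i < r" "j < r" using Mm by auto
      thus "norm ((M ^\<^sub>m m) $$ (i,j)) \<le> K1 * c1 ^ m" using K1 by simp
    qed
    have nN: "norm_bound (N ^\<^sub>m m) (K2 * c2 ^ m)"
    proof (rule norm_boundI)
      fix i j assume "i < dim_row (N ^\<^sub>m m)" "j < dim_col (N ^\<^sub>m m)"
      hence "i < s" "j < s" using Nm by auto
      thus "norm ((N ^\<^sub>m m) $$ (i,j)) \<le> K2 * c2 ^ m" using K2 by simp
    qed
    have b1: "norm_bound (M ^\<^sub>m m * X) (K1 * c1 ^ m * bx * real r)"
      by (rule norm_bound_mult[OF Mm X nM nX])
    have b2: "norm_bound (M ^\<^sub>m m * X * N ^\<^sub>m m) (K1 * c1 ^ m * bx * real r * (K2 * c2 ^ m) * real s)"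
      by (rule norm_bound_mult[OF _ Nm b1 nN], insert Mm X, auto)
    have Pc: "M ^\<^sub>m m * X * N ^\<^sub>m m \<in> carrier_mat r s" using Mm X Nm by auto
    have Qc: "A * (M ^\<^sub>m m * X * N ^\<^sub>m m) \<in> carrier_mat r s" using Ac Pc by auto
    have b3: "norm_bound (A * (M ^\<^sub>m m * X * N ^\<^sub>m m)) (ba * (K1 * c1 ^ m * bx * real r * (K2 * c2 ^ m) * real s) * real r)"
      by (rule norm_bound_mult[OF Ac Pc nA b2])
    have b4: "norm_bound (A * (M ^\<^sub>m m * X * N ^\<^sub>m m) * B) (ba * (K1 * c1 ^ m * bx * real r * (K2 * c2 ^ m) * real s) * real r * bb * real s)"
      by (rule norm_bound_mult[OF Qc Bc b3 nB])
    have Zc: "A * (M ^\<^sub>m m * X * N ^\<^sub>m m) * B \<in> carrier_mat r s" using Mm X Nm Ac Bc by auto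
    have "\<bar>bf r s A B X (lp M N m X)\<bar> \<le> real r * real s * bx * (ba * (K1 * c1 ^ m * bx * real r * (K2 * c2 ^ m) * real s) * real r * bb * real s)"
      unfolding bf_def lp_def by (rule ip_bound[OF X Zc nX b4])
    also have "\<dots> = K * (c1 * c2) ^ m" unfolding K_def by (simp add: power_mult_distrib ac_simps)
    finally show "\<bar>bf r s A B X (lp M N m X)\<bar> \<le> K * (c1 * c2) ^ m" .
  qed
qed



lemma limit_le:
  fixes x y p1 p2 :: real
  assumes H: "\<And>c1 c2. c1 > p1 \<Longrightarrow> c2 > p2 \<Longrightarrow> x \<le> c1 * c2 * y"
    and p1: "p1 \<ge> 0" and p2: "p2 \<ge> 0" and y: "y \<ge> 0"
  shows "x \<le> p1 * p2 * y"
proof (rule ccontr)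
  assume "\<not> ?thesis"
  hence e: "x - p1 * p2 * y > 0" by simp
  define e where "e = x - p1 * p2 * y"
  define D where "D = (p1 + p2 + 1) * y + 1"
  have "(p1 + p2 + 1) * y \<ge> 0" using p1 p2 y by simp
  hence D: "D > 0" unfolding D_def by linarith
  define d where "d = min 1 (e / D)"
  have d0: "d > 0" unfolding d_def using e D e_def by simp
  have d1: "d \<le> 1" unfolding d_def by simp
  have dD: "d * D \<le> e" unfolding d_def using D e e_def
    by (metis min.cobounded2 nonzero_mult_div_cancel_left order_less_irrefl pos_le_divide_eq times_divide_eq_right)
  have "x \<le> (p1 + d) * (p2 + d) * y" using H d0 by simp
  also have "\<dots> = p1 * p2 * y + d * (p1 + p2 + d) * y" by (simp add: algebra_simps)
  also have "d * (p1 + p2 + d) * y \<le> d * (p1 + p2 + 1) * y"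
    using d0 d1 y by (intro mult_right_mono mult_left_mono) auto
  also have "d * (p1 + p2 + 1) * y = d * D - d" unfolding D_def by (simp add: algebra_simps)
  finally have "x \<le> p1 * p2 * y + d * D - d" by simp
  thus False using dD d0 e_def by simp
qed

lemma rho_nonneg: assumes "M \<in> carrier_mat n n" "n > 0" shows "real_spectral_radius M \<ge> 0"
proof -
  have "map_mat complex_of_real M \<in> carrier_mat n n" using assms by auto
  from spectral_radius_mem_max(1)[OF this assms(2)] show ?thesis
    unfolding real_spectral_radius_def by auto
qed

lemma dir_if:
  fixes r s :: nat and A B S T :: "real mat"
  assumes r: "r > 0" and s: "s > 0"
    and As: "sym_mat r A" and Bs: "sym_mat s B"
    and Ap: "pos_def_mat r A" and Bp: "pos_def_mat s B"
    and S: "antisym_mat r S" and T: "antisym_mat s T"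
    and le: "real_spectral_radius (inv_mat A * S) * real_spectral_radius (T * inv_mat B) \<le> 1"
  shows "psd_op r s (Phi_op A B S T)"
proof -
  have Ac: "A \<in> carrier_mat r r" and At: "transpose_mat A = A" using As unfolding sym_mat_def by auto
  have Bc: "B \<in> carrier_mat s s" and Bt: "transpose_mat B = B" using Bs unfolding sym_mat_def by auto
  have Sc: "S \<in> carrier_mat r r" using S unfolding antisym_mat_def by auto
  have Tc: "T \<in> carrier_mat s s" using T unfolding antisym_mat_def by auto
  note iA = inv_mat_props[OF Ap] and iB = inv_mat_props[OF Bp]
  define M where "M = inv_mat A * S"
  define N where "N = T * inv_mat B"
  have Mc: "M \<in> carrier_mat r r" unfolding M_def using iA(1) Sc by auto
  have Nc: "N \<in> carrier_mat s s" unfolding N_def using iB(1) Tc by auto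
  have AM: "A * M = S" unfolding M_def
    using assoc_mult_mat[OF Ac iA(1) Sc, symmetric] iA(2) Sc by simp
  have NB: "N * B = T" unfolding N_def
    using assoc_mult_mat[OF Tc iB(1) Bc] iB(3) Tc by simp
  define p1 where "p1 = real_spectral_radius M"
  define p2 where "p2 = real_spectral_radius N"
  have p1: "p1 \<ge> 0" unfolding p1_def by (rule rho_nonneg[OF Mc r])
  have p2: "p2 \<ge> 0" unfolding p2_def by (rule rho_nonneg[OF Nc s])
  have psd: "\<And>W. W \<in> carrier_mat r s \<Longrightarrow> bf r s A B W W \<ge> 0"
    unfolding bf_def by (rule ip_AB_nonneg[OF Ap Bs Bp])
  show ?thesis unfolding psd_op_def
  proof
    fix X :: "real mat" assume X: "X \<in> carrier_mat r s"
    define h where "h m = bf r s A B X (lp M N m X)" for m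
    have lpc: "lp M N m X \<in> carrier_mat r s" for m by (rule lp_carrier[OF Mc Nc X])
    have h0: "h 0 = bf r s A B X X" unfolding h_def using lp_0[OF X Mc Nc] by simp
    have hsq: "bf r s A B (lp M N m X) (lp M N m X) = h (2 * m)" for m
    proof -
      have "bf r s A B (lp M N m X) (lp M N m X) = bf r s A B X (lp M N m (lp M N m X))"
        by (rule bf_adj_pow[OF Ac At Bc Bt S T Mc Nc AM NB X lpc])
      also have "lp M N m (lp M N m X) = lp M N (2 * m) X" using lp_lp[OF Mc Nc X, of m m] by (simp add: mult_2)
      finally show ?thesis unfolding h_def .
    qed
    have key: "\<bar>h 1\<bar> \<le> c1 * c2 * h 0" if c1: "c1 > p1" and c2: "c2 > p2" for c1 c2
    proof -
      obtain K1 where K1: "\<And>m i j. i < r \<Longrightarrow> j < r \<Longrightarrow> \<bar>(M ^\<^sub>m m) $$ (i,j)\<bar> \<le> K1 * c1 ^ m"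
        using pow_bound[OF Mc r c1[unfolded p1_def]] by blast
      obtain K2 where K2: "\<And>m i j. i < s \<Longrightarrow> j < s \<Longrightarrow> \<bar>(N ^\<^sub>m m) $$ (i,j)\<bar> \<le> K2 * c2 ^ m"
        using pow_bound[OF Nc s c2[unfolded p2_def]] by blast
      obtain K where K: "\<And>m. \<bar>h m\<bar> \<le> K * (c1 * c2) ^ m"
        using h_bound[OF Ac Bc Mc Nc X K1 K2] unfolding h_def by blast
      show ?thesis
      proof (rule gelfand_real[of h K])
        fix m
        have "(h m)^2 \<le> bf r s A B X X * bf r s A B (lp M N m X) (lp M N m X)"
          unfolding h_def by (intro bf_CS Ac At Bc Bt psd X lpc)
        thus "(h m)^2 \<le> h 0 * h (2 * m)" unfolding h0 hsq .
        show "h (2 * m) \<ge> 0" using psd[OF lpc[of m]] unfolding hsq .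
        show "\<bar>h m\<bar> \<le> K * (c1 * c2) ^ m" by (rule K)
      next
        show "c1 * c2 > 0" using c1 c2 p1 p2 by simp
      qed
    qed
    have H: "\<bar>h 1\<bar> \<le> p1 * p2 * h 0"
      by (rule limit_le[OF key p1 p2], auto simp: h0 intro: psd[OF X])
    have h1: "h 1 = ip r s X (S * X * T)"
    proof -
      have "lp M N 1 X = M * lp M N 0 X * N" using lp_Suc(2)[OF Mc Nc X, of 0] by simp
      also have "\<dots> = M * X * N" using lp_0[OF X Mc Nc] by simp
      finally show ?thesis unfolding h_def using bf_adj(1)[OF Ac At Bc Bt S T Mc Nc AM NB X X] by simp
    qed
    have "frob_inner X (Phi_op A B S T X) = ip r s X (A * X * B + S * X * T)"
      unfolding Phi_op_def by (rule frob_ip[OF X], insert Ac X Bc Sc Tc, auto)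
    also have "\<dots> = h 0 + h 1" unfolding h1 h0 bf_def
      by (rule ip_add_right, insert Ac X Bc Sc Tc, auto)
    finally have Q: "frob_inner X (Phi_op A B S T X) = h 0 + h 1" .
    have "h 0 \<ge> 0" unfolding h0 by (rule psd[OF X])
    moreover have "p1 * p2 \<le> 1" using le unfolding p1_def p2_def M_def N_def .
    ultimately have "p1 * p2 * h 0 \<le> 1 * h 0" by (intro mult_right_mono)
    hence "p1 * p2 * h 0 \<le> h 0" by simp
    thus "frob_inner X (Phi_op A B S T X) \<ge> 0" using Q H by linarith
  qed
qed



definition outer :: "nat \<Rightarrow> nat \<Rightarrow> real vec \<Rightarrow> real vec \<Rightarrow> real mat" where
  "outer r s u w = mat r s (\<lambda>(i,j). u $ i * w $ j)"

lemma outer_carrier[simp]: "outer r s u w \<in> carrier_mat r s"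
  unfolding outer_def by auto

lemma ip_outer:
  assumes u: "u \<in> carrier_vec r" and w: "w \<in> carrier_vec s" and u': "u' \<in> carrier_vec r'" and w': "w' \<in> carrier_vec s'"
    and P: "P \<in> carrier_mat r r'" and R: "R \<in> carrier_mat s' s"
  shows "ip r s (outer r s u w) (P * outer r' s' u' w' * R) = (u \<bullet> (P *\<^sub>v u')) * (w' \<bullet> (R *\<^sub>v w))"
proof -
  define c where "c j = (\<Sum>k<s'. w' $ k * R $$ (k,j))" for j
  have e1: "(P * outer r' s' u' w') $$ (a,k) = (P *\<^sub>v u') $ a * w' $ k" if "a < r" "k < s'" for a k
    using that P u' w' unfolding outer_def
    by (simp add: scalar_prod_def mult_mat_vec_def sum_distrib_right sum_distrib_left ac_simps)
  have e2: "(P * outer r' s' u' w' * R) $$ (a,j) = (P *\<^sub>v u') $ a * c j" if a: "a < r" and j: "j < s" for a j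
  proof -
    have "(P * outer r' s' u' w' * R) $$ (a,j) = (\<Sum>k<s'. (P * outer r' s' u' w') $$ (a,k) * R $$ (k,j))"
      using a j P R by (auto simp: scalar_prod_def atLeast0LessThan outer_def intro!: sum.cong)
    also have "\<dots> = (\<Sum>k<s'. (P *\<^sub>v u') $ a * w' $ k * R $$ (k,j))" using e1 a by simp
    finally show ?thesis unfolding c_def by (simp add: sum_distrib_left ac_simps)
  qed
  have "ip r s (outer r s u w) (P * outer r' s' u' w' * R) = (\<Sum>a<r. \<Sum>j<s. (u $ a * (P *\<^sub>v u') $ a) * (w $ j * c j))"
    unfolding ip_def using e2 u w by (auto simp: outer_def ac_simps intro!: sum.cong)
  also have "\<dots> = (\<Sum>a<r. u $ a * (P *\<^sub>v u') $ a) * (\<Sum>j<s. w $ j * c j)"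
    by (simp add: sum_product)
  also have "(\<Sum>a<r. u $ a * (P *\<^sub>v u') $ a) = u \<bullet> (P *\<^sub>v u')"
    using u P by (simp add: scalar_prod_def atLeast0LessThan)
  also have "(\<Sum>j<s. w $ j * c j) = (\<Sum>k<s'. \<Sum>j<s. w' $ k * R $$ (k,j) * w $ j)"
    unfolding c_def by (simp add: sum_distrib_left sum_distrib_right ac_simps, rule sum.swap)
  also have "\<dots> = w' \<bullet> (R *\<^sub>v w)"
    using w' R w by (simp add: scalar_prod_def mult_mat_vec_def atLeast0LessThan sum_distrib_left ac_simps)
  finally show ?thesis .
qed

lemma ip_add_left: assumes "Y \<in> carrier_mat r s" "Z \<in> carrier_mat r s"
  shows "ip r s (Y + Z) X = ip r s Y X + ip r s Z X"
  using ip_add_right[OF assms, of X] by (simp add: ip_sym)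

lemma ip_expand:
  assumes X1: "X1 \<in> carrier_mat r s" and X2: "X2 \<in> carrier_mat r s"
    and P: "P \<in> carrier_mat r r" and R: "R \<in> carrier_mat s s"
  shows "ip r s (X1 + X2) (P * (X1 + X2) * R) =
    ip r s X1 (P * X1 * R) + ip r s X1 (P * X2 * R) + ip r s X2 (P * X1 * R) + ip r s X2 (P * X2 * R)"
proof -
  have "P * (X1 + X2) * R = P * X1 * R + P * X2 * R"
    using X1 X2 P R by (simp add: mult_add_distrib_mat[of P r r] add_mult_distrib_mat[of _ r s])
  thus ?thesis using X1 X2 P R by (simp add: ip_add_left ip_add_right)
qed

lemma sym_quad: assumes "(P :: real mat) \<in> carrier_mat n n" "transpose_mat P = P" "p \<in> carrier_vec n" "q \<in> carrier_vec n"
  shows "q \<bullet> (P *\<^sub>v p) = p \<bullet> (P *\<^sub>v q)"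
proof -
  have "(transpose_mat P *\<^sub>v q) \<bullet> p = q \<bullet> (P *\<^sub>v p)" by (rule transpose_vec_mult_scalar[OF assms(1,3,4)])
  thus ?thesis using assms by (simp add: comm_scalar_prod[of _ n])
qed

lemma antisym_quad: assumes "antisym_mat n S" "v \<in> carrier_vec n"
  shows "v \<bullet> (S *\<^sub>v v) = 0"
proof -
  have S: "S \<in> carrier_mat n n" and St: "transpose_mat S = - S" using assms unfolding antisym_mat_def by auto
  have "(transpose_mat S *\<^sub>v v) \<bullet> v = v \<bullet> (S *\<^sub>v v)" by (rule transpose_vec_mult_scalar[OF S assms(2) assms(2)])
  hence "- ((S *\<^sub>v v) \<bullet> v) = v \<bullet> (S *\<^sub>v v)" using St S assms(2) by simp
  thus ?thesis using S assms(2) by (simp add: comm_scalar_prod[of _ n])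
qed

definition Qf :: "nat \<Rightarrow> nat \<Rightarrow> real mat \<Rightarrow> real mat \<Rightarrow> real mat \<Rightarrow> real mat \<Rightarrow> real mat \<Rightarrow> real" where
  "Qf r s A B S T X = ip r s X (A * X * B) + ip r s X (S * X * T)"

lemma Qf_outer2:
  assumes A: "A \<in> carrier_mat r r" and B: "B \<in> carrier_mat s s" and S: "S \<in> carrier_mat r r" and T: "T \<in> carrier_mat s s"
    and u1: "u1 \<in> carrier_vec r" and u2: "u2 \<in> carrier_vec r" and w1: "w1 \<in> carrier_vec s" and w2: "w2 \<in> carrier_vec s"
  shows "Qf r s A B S T (outer r s u1 w1 + outer r s u2 w2) =
    (u1 \<bullet> (A *\<^sub>v u1)) * (w1 \<bullet> (B *\<^sub>v w1)) + (u1 \<bullet> (A *\<^sub>v u2)) * (w2 \<bullet> (B *\<^sub>v w1))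
  + (u2 \<bullet> (A *\<^sub>v u1)) * (w1 \<bullet> (B *\<^sub>v w2)) + (u2 \<bullet> (A *\<^sub>v u2)) * (w2 \<bullet> (B *\<^sub>v w2))
  + (u1 \<bullet> (S *\<^sub>v u1)) * (w1 \<bullet> (T *\<^sub>v w1)) + (u1 \<bullet> (S *\<^sub>v u2)) * (w2 \<bullet> (T *\<^sub>v w1))
  + (u2 \<bullet> (S *\<^sub>v u1)) * (w1 \<bullet> (T *\<^sub>v w2)) + (u2 \<bullet> (S *\<^sub>v u2)) * (w2 \<bullet> (T *\<^sub>v w2))"
  unfolding Qf_def
  by (simp add: ip_expand[OF outer_carrier outer_carrier A B] ip_expand[OF outer_carrier outer_carrier S T]
      ip_outer[OF _ _ _ _ A B] ip_outer[OF _ _ _ _ S T] u1 u2 w1 w2)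



lemma key_identity:
  assumes Ac: "A \<in> carrier_mat r r" and At: "transpose_mat A = A"
    and Bc: "B \<in> carrier_mat s s" and Bt: "transpose_mat B = B"
    and S: "antisym_mat r S" and T: "antisym_mat s T"
    and p: "p \<in> carrier_vec r" and q: "q \<in> carrier_vec r" and x: "x \<in> carrier_vec s" and y: "y \<in> carrier_vec s"
    and Sp: "S *\<^sub>v p = (- l) \<cdot>\<^sub>v (A *\<^sub>v q)" and Sq: "S *\<^sub>v q = l \<cdot>\<^sub>v (A *\<^sub>v p)"
    and Tx: "T *\<^sub>v x = (- m) \<cdot>\<^sub>v (B *\<^sub>v y)" and Ty: "T *\<^sub>v y = m \<cdot>\<^sub>v (B *\<^sub>v x)"
  shows "Qf r s A B S T (outer r s p x + outer r s q y) + Qf r s A B S T (outer r s q x + outer r s ((-1) \<cdot>\<^sub>v p) y)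
    = (1 - l * m) * (p \<bullet> (A *\<^sub>v p) + q \<bullet> (A *\<^sub>v q)) * (x \<bullet> (B *\<^sub>v x) + y \<bullet> (B *\<^sub>v y))"
proof -
  have Sc: "S \<in> carrier_mat r r" using S unfolding antisym_mat_def by auto
  have Tc: "T \<in> carrier_mat s s" using T unfolding antisym_mat_def by auto
  have p': "(-1) \<cdot>\<^sub>v p \<in> carrier_vec r" using p by simp
  have qAp: "q \<bullet> (A *\<^sub>v p) = p \<bullet> (A *\<^sub>v q)" by (rule sym_quad[OF Ac At p q])
  have yBx: "y \<bullet> (B *\<^sub>v x) = x \<bullet> (B *\<^sub>v y)" by (rule sym_quad[OF Bc Bt x y])
  have mA: "A *\<^sub>v ((-1) \<cdot>\<^sub>v p) = (-1) \<cdot>\<^sub>v (A *\<^sub>v p)" by (rule mult_mat_vec[OF Ac p])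
  have mS: "S *\<^sub>v ((-1) \<cdot>\<^sub>v p) = (-1) \<cdot>\<^sub>v (S *\<^sub>v p)" by (rule mult_mat_vec[OF Sc p])
  have dims: "dim_vec p = r" "dim_vec q = r" "dim_vec x = s" "dim_vec y = s" "dim_row A = r" "dim_row B = s"
    using p q x y Ac Bc by auto
  show ?thesis
    unfolding Qf_outer2[OF Ac Bc Sc Tc p q x y] Qf_outer2[OF Ac Bc Sc Tc q p' x y]
    by (simp add: mA mS Sp Sq Tx Ty dims qAp yBx algebra_simps)
qed



lemma eigen_real_parts:
  fixes M :: "real mat"
  assumes M: "M \<in> carrier_mat n n" and n: "n > 0"
  shows "\<exists>p q lam. p \<in> carrier_vec n \<and> q \<in> carrier_vec n \<and> (p \<noteq> 0\<^sub>v n \<or> q \<noteq> 0\<^sub>v n) \<and>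
     M *\<^sub>v p = Re lam \<cdot>\<^sub>v p + (- Im lam) \<cdot>\<^sub>v q \<and> M *\<^sub>v q = Im lam \<cdot>\<^sub>v p + Re lam \<cdot>\<^sub>v q \<and>
     cmod lam = real_spectral_radius M"
proof -
  define Mc where "Mc = map_mat complex_of_real M"
  have Mc: "Mc \<in> carrier_mat n n" using M unfolding Mc_def by auto
  from spectral_radius_mem_max(1)[OF Mc n] obtain lam where lam: "lam \<in> spectrum Mc"
    and eq: "spectral_radius Mc = cmod lam" by auto
  from lam obtain u where u: "eigenvector Mc u lam" unfolding spectrum_def eigenvalue_def by auto
  have uc: "u \<in> carrier_vec n" and u0: "u \<noteq> 0\<^sub>v n" and Mu: "Mc *\<^sub>v u = lam \<cdot>\<^sub>v u"
    using u Mc unfolding eigenvector_def by auto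
  define p where "p = vec n (\<lambda>i. Re (u $ i))"
  define q where "q = vec n (\<lambda>i. Im (u $ i))"
  have pc: "p \<in> carrier_vec n" and qc: "q \<in> carrier_vec n" unfolding p_def q_def by auto
  have comp: "(\<Sum>j<n. complex_of_real (M $$ (i,j)) * u $ j) = lam * u $ i" if i: "i < n" for i
  proof -
    have "(Mc *\<^sub>v u) $ i = (lam \<cdot>\<^sub>v u) $ i" using Mu by simp
    thus ?thesis using i Mc uc M unfolding Mc_def
      by (simp add: scalar_prod_def atLeast0LessThan)
  qed
  have Mp: "M *\<^sub>v p = Re lam \<cdot>\<^sub>v p + (- Im lam) \<cdot>\<^sub>v q"
  proof (rule eq_vecI)
    fix i assume "i < dim_vec (Re lam \<cdot>\<^sub>v p + (- Im lam) \<cdot>\<^sub>v q)"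
    hence i: "i < n" using pc qc by simp
    have "(M *\<^sub>v p) $ i = Re (\<Sum>j<n. complex_of_real (M $$ (i,j)) * u $ j)"
      using i M uc unfolding p_def by (simp add: scalar_prod_def atLeast0LessThan Re_sum)
    also have "\<dots> = Re (lam * u $ i)" using comp[OF i] by simp
    also have "\<dots> = (Re lam \<cdot>\<^sub>v p + (- Im lam) \<cdot>\<^sub>v q) $ i" using i unfolding p_def q_def by simp
    finally show "(M *\<^sub>v p) $ i = (Re lam \<cdot>\<^sub>v p + (- Im lam) \<cdot>\<^sub>v q) $ i" .
  qed (use M pc qc in auto)
  have Mq: "M *\<^sub>v q = Im lam \<cdot>\<^sub>v p + Re lam \<cdot>\<^sub>v q"
  proof (rule eq_vecI)
    fix i assume "i < dim_vec (Im lam \<cdot>\<^sub>v p + Re lam \<cdot>\<^sub>v q)"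
    hence i: "i < n" using pc qc by simp
    have "(M *\<^sub>v q) $ i = Im (\<Sum>j<n. complex_of_real (M $$ (i,j)) * u $ j)"
      using i M uc unfolding q_def by (simp add: scalar_prod_def atLeast0LessThan Im_sum)
    also have "\<dots> = Im (lam * u $ i)" using comp[OF i] by simp
    also have "\<dots> = (Im lam \<cdot>\<^sub>v p + Re lam \<cdot>\<^sub>v q) $ i" using i unfolding p_def q_def by (simp add: ac_simps)
    finally show "(M *\<^sub>v q) $ i = (Im lam \<cdot>\<^sub>v p + Re lam \<cdot>\<^sub>v q) $ i" .
  qed (use M pc qc in auto)
  have nz: "p \<noteq> 0\<^sub>v n \<or> q \<noteq> 0\<^sub>v n"
  proof (rule ccontr)
    assume "\<not> ?thesis"
    hence "p = 0\<^sub>v n" "q = 0\<^sub>v n" by auto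
    hence "u $ i = 0" if "i < n" for i
      using that unfolding p_def q_def by (metis complex_eqI index_vec index_zero_vec(1) zero_complex.sel(1) zero_complex.sel(2))
    hence "u = 0\<^sub>v n" using uc by (intro eq_vecI) auto
    thus False using u0 by simp
  qed
  show ?thesis
    by (rule exI[of _ p], rule exI[of _ q], rule exI[of _ lam])
       (use pc qc nz Mp Mq eq in \<open>auto simp: real_spectral_radius_def Mc_def\<close>)
qed

lemma imag_zero:
  assumes P: "pos_def_mat n P" "sym_mat n P" and R: "antisym_mat n R"
    and p: "p \<in> carrier_vec n" and q: "q \<in> carrier_vec n" and nz: "p \<noteq> 0\<^sub>v n \<or> q \<noteq> 0\<^sub>v n"
    and Rp: "R *\<^sub>v p = a \<cdot>\<^sub>v (P *\<^sub>v p) + (- b) \<cdot>\<^sub>v (P *\<^sub>v q)"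
    and Rq: "R *\<^sub>v q = b \<cdot>\<^sub>v (P *\<^sub>v p) + a \<cdot>\<^sub>v (P *\<^sub>v q)"
  shows "a = 0"
proof -
  have Pc: "P \<in> carrier_mat n n" and Pt: "transpose_mat P = P" using P unfolding sym_mat_def by auto
  have dims: "dim_vec p = n" "dim_vec q = n" "dim_row P = n" using p q Pc by auto
  have e1: "p \<bullet> (R *\<^sub>v p) = 0" by (rule antisym_quad[OF R p])
  have e2: "q \<bullet> (R *\<^sub>v q) = 0" by (rule antisym_quad[OF R q])
  have s: "q \<bullet> (P *\<^sub>v p) = p \<bullet> (P *\<^sub>v q)" by (rule sym_quad[OF Pc Pt p q])
  have "p \<bullet> (R *\<^sub>v p) = a * (p \<bullet> (P *\<^sub>v p)) - b * (p \<bullet> (P *\<^sub>v q))"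
    unfolding Rp using p q Pc by (simp add: scalar_prod_add_distrib[of _ n] dims)
  moreover have "q \<bullet> (R *\<^sub>v q) = b * (q \<bullet> (P *\<^sub>v p)) + a * (q \<bullet> (P *\<^sub>v q))"
    unfolding Rq using p q Pc by (simp add: scalar_prod_add_distrib[of _ n] dims)
  ultimately have "a * (p \<bullet> (P *\<^sub>v p) + q \<bullet> (P *\<^sub>v q)) = 0" using e1 e2 s by (simp add: algebra_simps)
  moreover have "p \<bullet> (P *\<^sub>v p) + q \<bullet> (P *\<^sub>v q) > 0"
  proof -
    have 1: "p \<bullet> (P *\<^sub>v p) \<ge> 0" by (rule pd_nonneg[OF P(1) p])
    have 2: "q \<bullet> (P *\<^sub>v q) \<ge> 0" by (rule pd_nonneg[OF P(1) q])
    show ?thesis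
    proof (cases "p = 0\<^sub>v n")
      case True
      hence "q \<noteq> 0\<^sub>v n" using nz by simp
      hence "q \<bullet> (P *\<^sub>v q) > 0" using P(1) q unfolding pos_def_mat_def by auto
      thus ?thesis using 1 by simp
    next
      case False
      hence "p \<bullet> (P *\<^sub>v p) > 0" using P(1) p unfolding pos_def_mat_def by auto
      thus ?thesis using 2 by simp
    qed
  qed
  ultimately show ?thesis by simp
qed



lemma zero_smult_add1[simp]: "dim_vec v = dim_vec w \<Longrightarrow> (0::real) \<cdot>\<^sub>v v + w = w"
  by (rule eq_vecI) auto

lemma zero_smult_add2[simp]: "dim_vec v = dim_vec w \<Longrightarrow> w + (0::real) \<cdot>\<^sub>v v = w"
  by (rule eq_vecI) auto

lemma pair_pos: assumes P: "pos_def_mat n P" and p: "p \<in> carrier_vec n" and q: "q \<in> carrier_vec n"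
  and nz: "p \<noteq> 0\<^sub>v n \<or> q \<noteq> 0\<^sub>v n"
  shows "p \<bullet> (P *\<^sub>v p) + q \<bullet> (P *\<^sub>v q) > 0"
proof -
  have 1: "p \<bullet> (P *\<^sub>v p) \<ge> 0" by (rule pd_nonneg[OF P p])
  have 2: "q \<bullet> (P *\<^sub>v q) \<ge> 0" by (rule pd_nonneg[OF P q])
  show ?thesis
  proof (cases "p = 0\<^sub>v n")
    case True
    hence "q \<noteq> 0\<^sub>v n" using nz by simp
    hence "q \<bullet> (P *\<^sub>v q) > 0" using P q unfolding pos_def_mat_def by auto
    thus ?thesis using 1 by simp
  next
    case False
    hence "p \<bullet> (P *\<^sub>v p) > 0" using P p unfolding pos_def_mat_def by auto
    thus ?thesis using 2 by simp
  qed
qed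

lemma Qf_phi: assumes Ac: "A \<in> carrier_mat r r" and Bc: "B \<in> carrier_mat s s"
  and Sc: "S \<in> carrier_mat r r" and Tc: "T \<in> carrier_mat s s" and X: "X \<in> carrier_mat r s"
  shows "Qf r s A B S T X = frob_inner X (Phi_op A B S T X)"
proof -
  have "frob_inner X (Phi_op A B S T X) = ip r s X (A * X * B + S * X * T)"
    unfolding Phi_op_def by (rule frob_ip[OF X], insert Ac X Bc Sc Tc, auto)
  also have "\<dots> = Qf r s A B S T X" unfolding Qf_def
    by (rule ip_add_right, insert Ac X Bc Sc Tc, auto)
  finally show ?thesis by simp
qed

lemma contra_lemma:
  assumes As: "sym_mat r A" and Bs: "sym_mat s B"
    and Ap: "pos_def_mat r A" and Bp: "pos_def_mat s B"
    and S: "antisym_mat r S" and T: "antisym_mat s T"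
    and psd: "psd_op r s (Phi_op A B S T)"
    and p: "p \<in> carrier_vec r" and q: "q \<in> carrier_vec r" and nzA: "p \<noteq> 0\<^sub>v r \<or> q \<noteq> 0\<^sub>v r"
    and x: "x \<in> carrier_vec s" and y: "y \<in> carrier_vec s" and nzB: "x \<noteq> 0\<^sub>v s \<or> y \<noteq> 0\<^sub>v s"
    and Sp: "S *\<^sub>v p = (- l) \<cdot>\<^sub>v (A *\<^sub>v q)" and Sq: "S *\<^sub>v q = l \<cdot>\<^sub>v (A *\<^sub>v p)"
    and Tx: "T *\<^sub>v x = (- m) \<cdot>\<^sub>v (B *\<^sub>v y)" and Ty: "T *\<^sub>v y = m \<cdot>\<^sub>v (B *\<^sub>v x)"
    and lm: "l * m > 1"
  shows False
proof -
  have Ac: "A \<in> carrier_mat r r" and At: "transpose_mat A = A" using As unfolding sym_mat_def by auto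
  have Bc: "B \<in> carrier_mat s s" and Bt: "transpose_mat B = B" using Bs unfolding sym_mat_def by auto
  have Sc: "S \<in> carrier_mat r r" using S unfolding antisym_mat_def by auto
  have Tc: "T \<in> carrier_mat s s" using T unfolding antisym_mat_def by auto
  define X1 where "X1 = outer r s p x + outer r s q y"
  define X2 where "X2 = outer r s q x + outer r s ((-1) \<cdot>\<^sub>v p) y"
  have X1: "X1 \<in> carrier_mat r s" and X2: "X2 \<in> carrier_mat r s" unfolding X1_def X2_def by auto
  have q1: "Qf r s A B S T X1 \<ge> 0" using psd X1 unfolding psd_op_def Qf_phi[OF Ac Bc Sc Tc X1] by auto
  have q2: "Qf r s A B S T X2 \<ge> 0" using psd X2 unfolding psd_op_def Qf_phi[OF Ac Bc Sc Tc X2] by auto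
  have eq: "Qf r s A B S T X1 + Qf r s A B S T X2 = (1 - l * m) * (p \<bullet> (A *\<^sub>v p) + q \<bullet> (A *\<^sub>v q)) * (x \<bullet> (B *\<^sub>v x) + y \<bullet> (B *\<^sub>v y))"
    unfolding X1_def X2_def by (rule key_identity[OF Ac At Bc Bt S T p q x y Sp Sq Tx Ty])
  have a: "p \<bullet> (A *\<^sub>v p) + q \<bullet> (A *\<^sub>v q) > 0" by (rule pair_pos[OF Ap p q nzA])
  have b: "x \<bullet> (B *\<^sub>v x) + y \<bullet> (B *\<^sub>v y) > 0" by (rule pair_pos[OF Bp x y nzB])
  have "(1 - l * m) * (p \<bullet> (A *\<^sub>v p) + q \<bullet> (A *\<^sub>v q)) * (x \<bullet> (B *\<^sub>v x) + y \<bullet> (B *\<^sub>v y)) < 0"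
    using a b lm by (simp add: mult_neg_pos mult_pos_pos)
  thus False using eq q1 q2 by linarith
qed

lemma dir_only_if:
  fixes r s :: nat and A B S T :: "real mat"
  assumes r: "r > 0" and s: "s > 0"
    and As: "sym_mat r A" and Bs: "sym_mat s B"
    and Ap: "pos_def_mat r A" and Bp: "pos_def_mat s B"
    and S: "antisym_mat r S" and T: "antisym_mat s T"
    and psd: "psd_op r s (Phi_op A B S T)"
  shows "real_spectral_radius (inv_mat A * S) * real_spectral_radius (T * inv_mat B) \<le> 1"
proof (rule ccontr)
  assume gt: "\<not> ?thesis"
  have Ac: "A \<in> carrier_mat r r" and At: "transpose_mat A = A" using As unfolding sym_mat_def by auto
  have Bc: "B \<in> carrier_mat s s" and Bt: "transpose_mat B = B" using Bs unfolding sym_mat_def by auto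
  have Sc: "S \<in> carrier_mat r r" using S unfolding antisym_mat_def by auto
  have Tc: "T \<in> carrier_mat s s" using T unfolding antisym_mat_def by auto
  note iA = inv_mat_props[OF Ap] and iB = inv_mat_props[OF Bp]
  define M where "M = inv_mat A * S"
  define N where "N = T * inv_mat B"
  have Mc: "M \<in> carrier_mat r r" unfolding M_def using iA(1) Sc by auto
  have Nc: "N \<in> carrier_mat s s" unfolding N_def using iB(1) Tc by auto
  have AM: "A * M = S" unfolding M_def
    using assoc_mult_mat[OF Ac iA(1) Sc, symmetric] iA(2) Sc by simp
  obtain p q lam where p: "p \<in> carrier_vec r" and q: "q \<in> carrier_vec r" and nzA: "p \<noteq> 0\<^sub>v r \<or> q \<noteq> 0\<^sub>v r"
    and Mp: "M *\<^sub>v p = Re lam \<cdot>\<^sub>v p + (- Im lam) \<cdot>\<^sub>v q" and Mq: "M *\<^sub>v q = Im lam \<cdot>\<^sub>v p + Re lam \<cdot>\<^sub>v q"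
    and lamr: "cmod lam = real_spectral_radius M"
    using eigen_real_parts[OF Mc r] by blast
  have Sv: "S *\<^sub>v v = A *\<^sub>v (M *\<^sub>v v)" if "v \<in> carrier_vec r" for v
    unfolding AM[symmetric] using Ac Mc that by simp
  have Sp0: "S *\<^sub>v p = Re lam \<cdot>\<^sub>v (A *\<^sub>v p) + (- Im lam) \<cdot>\<^sub>v (A *\<^sub>v q)"
    unfolding Sv[OF p] Mp using Ac p q by (simp add: mult_add_distrib_mat_vec[OF Ac] mult_mat_vec[OF Ac])
  have Sq0: "S *\<^sub>v q = Im lam \<cdot>\<^sub>v (A *\<^sub>v p) + Re lam \<cdot>\<^sub>v (A *\<^sub>v q)"
    unfolding Sv[OF q] Mq using Ac p q by (simp add: mult_add_distrib_mat_vec[OF Ac] mult_mat_vec[OF Ac])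
  have re1: "Re lam = 0" by (rule imag_zero[OF Ap As S p q nzA Sp0 Sq0])
  define l where "l = Im lam"
  have Sp: "S *\<^sub>v p = (- l) \<cdot>\<^sub>v (A *\<^sub>v q)" using Sp0 re1 Ac p q unfolding l_def by simp
  have Sq: "S *\<^sub>v q = l \<cdot>\<^sub>v (A *\<^sub>v p)" using Sq0 re1 Ac p q unfolding l_def by simp
  have l: "\<bar>l\<bar> = real_spectral_radius M" unfolding lamr[symmetric] l_def using re1 by (simp add: cmod_def)
  obtain x0 y0 mu where x0: "x0 \<in> carrier_vec s" and y0: "y0 \<in> carrier_vec s" and nz0: "x0 \<noteq> 0\<^sub>v s \<or> y0 \<noteq> 0\<^sub>v s"
    and Nx: "N *\<^sub>v x0 = Re mu \<cdot>\<^sub>v x0 + (- Im mu) \<cdot>\<^sub>v y0" and Ny: "N *\<^sub>v y0 = Im mu \<cdot>\<^sub>v x0 + Re mu \<cdot>\<^sub>v y0"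
    and mur: "cmod mu = real_spectral_radius N"
    using eigen_real_parts[OF Nc s] by blast
  define x where "x = inv_mat B *\<^sub>v x0"
  define y where "y = inv_mat B *\<^sub>v y0"
  have x: "x \<in> carrier_vec s" and y: "y \<in> carrier_vec s" unfolding x_def y_def using iB(1) x0 y0 by auto
  have Bx: "B *\<^sub>v x = x0" unfolding x_def using assoc_mult_mat_vec[OF Bc iB(1) x0, symmetric] iB(2) x0 by simp
  have By: "B *\<^sub>v y = y0" unfolding y_def using assoc_mult_mat_vec[OF Bc iB(1) y0, symmetric] iB(2) y0 by simp
  have nzB: "x \<noteq> 0\<^sub>v s \<or> y \<noteq> 0\<^sub>v s"
  proof (rule ccontr)
    assume "\<not> ?thesis"
    hence "x = 0\<^sub>v s" "y = 0\<^sub>v s" by auto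
    hence "x0 = 0\<^sub>v s" "y0 = 0\<^sub>v s" using Bx By Bc by auto
    thus False using nz0 by simp
  qed
  have Tx0: "T *\<^sub>v x = Re mu \<cdot>\<^sub>v (B *\<^sub>v x) + (- Im mu) \<cdot>\<^sub>v (B *\<^sub>v y)"
    unfolding Bx By using Nx unfolding N_def x_def using assoc_mult_mat_vec[OF Tc iB(1) x0] by simp
  have Ty0: "T *\<^sub>v y = Im mu \<cdot>\<^sub>v (B *\<^sub>v x) + Re mu \<cdot>\<^sub>v (B *\<^sub>v y)"
    unfolding Bx By using Ny unfolding N_def y_def using assoc_mult_mat_vec[OF Tc iB(1) y0] by simp
  have re2: "Re mu = 0" by (rule imag_zero[OF Bp Bs T x y nzB Tx0 Ty0])
  define m where "m = Im mu"
  have Tx: "T *\<^sub>v x = (- m) \<cdot>\<^sub>v (B *\<^sub>v y)" using Tx0 re2 Bc x y unfolding m_def by simp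
  have Ty: "T *\<^sub>v y = m \<cdot>\<^sub>v (B *\<^sub>v x)" using Ty0 re2 Bc x y unfolding m_def by simp
  have m: "\<bar>m\<bar> = real_spectral_radius N" unfolding mur[symmetric] m_def using re2 by (simp add: cmod_def)
  have big: "\<bar>l * m\<bar> > 1" using gt l m unfolding M_def N_def by (simp add: abs_mult)
  show False
  proof (cases "l * m > 1")
    case True
    show False by (rule contra_lemma[OF As Bs Ap Bp S T psd p q nzA x y nzB Sp Sq Tx Ty True])
  next
    case False
    hence lm: "(- l) * m > 1" using big by (simp add: abs_if split: if_splits)
    define q' where "q' = (-1) \<cdot>\<^sub>v q"
    have q': "q' \<in> carrier_vec r" unfolding q'_def using q by simp
    have nzA': "p \<noteq> 0\<^sub>v r \<or> q' \<noteq> 0\<^sub>v r"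
    proof -
      have "q = 0\<^sub>v r" if h: "q' = 0\<^sub>v r"
      proof (rule eq_vecI)
        fix i assume i: "i < dim_vec (0\<^sub>v r)"
        hence "q' $ i = 0" using h by simp
        thus "q $ i = 0\<^sub>v r $ i" using q i unfolding q'_def by simp
      qed (use q in simp)
      thus ?thesis using nzA by blast
    qed
    have Sp': "S *\<^sub>v p = (- (- l)) \<cdot>\<^sub>v (A *\<^sub>v q')"
      unfolding Sp q'_def mult_mat_vec[OF Ac q] smult_smult_assoc by simp
    have Sq': "S *\<^sub>v q' = (- l) \<cdot>\<^sub>v (A *\<^sub>v p)"
      unfolding q'_def mult_mat_vec[OF Sc q] Sq smult_smult_assoc by simp
    show False by (rule contra_lemma[OF As Bs Ap Bp S T psd p q' nzA' x y nzB Sp' Sq' Tx Ty lm])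
  qed
qed


theorem lemma6:
  fixes r s :: nat and \<alpha> \<beta> \<sigma> \<tau> :: "real mat"
  assumes "r > 0" and "s > 0"
    and "sym_mat r \<alpha>" and "sym_mat s \<beta>"
    and "pos_def_mat r \<alpha>" and "pos_def_mat s \<beta>"
    and "antisym_mat r \<sigma>" and "antisym_mat s \<tau>"
  shows "psd_op r s (Phi_op \<alpha> \<beta> \<sigma> \<tau>) \<longleftrightarrow>
    real_spectral_radius (inv_mat \<alpha> * \<sigma>) * real_spectral_radius (\<tau> * inv_mat \<beta>) \<le> 1"
  using dir_if[OF assms] dir_only_if[OF assms] by blast

end
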